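(* Let $\mathbf a:\mathbb{R}^d\to\mathbb{R}^n$ be differentiable, let $z_1,\dots,z_n$ be independent real noises with common differentiable cdf $F$, and let $x_i=\mathrm{sign}(a_i(\boldsymbol\phi)-z_i)\in\{-1,1\}$, so that $P(x_i=1)=F(a_i(\boldsymbol\phi))$ independently. Let $\mathcal L:\mathbb{R}^n\to\mathbb{R}$ be multilinear, i.e., affine in each coordinate $x_i$ when the other coordinates are fixed. Define the straight-through estimator $$\hat{\mathbf g}(\mathbf x)=\sum_{i=1}^n 2F'(a_i(\boldsymbol\phi))\,\nabla_{\boldsymbol\phi}a_i(\boldsymbol\phi)\,\frac{\partial\mathcal L(\mathbf x)}{\partial x_i}.$$ Then $\hat{\mathbf g}$ is unbiased: $\mathbb{E}_{\mathbf x}[\hat{\mathbf g}(\mathbf x)]=\nabla_{\boldsymbol\phi}\mathbb{E}_{\mathbf x}[\mathcal L(\mathbf x)]$. *)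

theory Defs
  imports "HOL-Analysis.Analysis" "HOL-Probability.Probability"
begin

definition is_cdf :: "(real \<Rightarrow> real) \<Rightarrow> bool" where
  "is_cdf F \<longleftrightarrow> mono F \<and> (\<forall>t. continuous (at_right t) F)
     \<and> (F \<longlongrightarrow> 0) at_bot \<and> (F \<longlongrightarrow> 1) at_top"

definition sign_pmf :: "real \<Rightarrow> real pmf" where
  "sign_pmf p = map_pmf (\<lambda>b. if b then 1 else -1) (bernoulli_pmf p)"

definition ste_dist :: "(real \<Rightarrow> real) \<Rightarrow> ('d \<Rightarrow> 'n::finite \<Rightarrow> real) \<Rightarrow> 'd \<Rightarrow> ('n \<Rightarrow> real) pmf" where
  "ste_dist F a \<phi> = Pi_pmf UNIV 0 (\<lambda>i. sign_pmf (F (a \<phi> i)))"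

definition multilinear :: "(('n \<Rightarrow> real) \<Rightarrow> real) \<Rightarrow> bool" where
  "multilinear L \<longleftrightarrow> (\<forall>x i. \<exists>c b. \<forall>t. L (x(i := t)) = c * t + b)"

definition partial :: "(('n \<Rightarrow> real) \<Rightarrow> real) \<Rightarrow> 'n \<Rightarrow> ('n \<Rightarrow> real) \<Rightarrow> real" where
  "partial L i x = deriv (\<lambda>t. L (x(i := t))) (x i)"

definition ste :: "(real \<Rightarrow> real) \<Rightarrow> ('d \<Rightarrow> 'n::finite \<Rightarrow> real) \<Rightarrow> ('d \<Rightarrow> 'n \<Rightarrow> 'd)
     \<Rightarrow> (('n \<Rightarrow> real) \<Rightarrow> real) \<Rightarrow> 'd \<Rightarrow> ('n \<Rightarrow> real) \<Rightarrow> 'd::real_vector" where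
  "ste F a ga L \<phi> x = (\<Sum>i\<in>UNIV. (2 * deriv F (a \<phi> i) * partial L i x) *\<^sub>R ga \<phi> i)"

end

theory Submission
  imports Defs
begin

definition qq :: "real \<Rightarrow> real \<Rightarrow> real" where "qq p v = (1 + v * (2 * p - 1)) / 2"
definition SS :: "('n \<Rightarrow> real) set" where "SS = {x. \<forall>i. x i \<in> {-1, 1}}"

lemma finite_SS: "finite (SS :: ('n::finite \<Rightarrow> real) set)"
proof -
  have "SS = (PiE UNIV (\<lambda>_. {-1, 1}) :: ('n \<Rightarrow> real) set)"
    by (auto simp: SS_def PiE_def Pi_def extensional_def)
  then show ?thesis using finite_PiE[of "UNIV::'n set" "\<lambda>_. {-1,1::real}"] by simp
qed

lemma cdf_bounds: assumes "is_cdf F" shows "0 \<le> F t" "F t \<le> 1"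
proof -
  have m: "mono F" and l0: "(F \<longlongrightarrow> 0) at_bot" and l1: "(F \<longlongrightarrow> 1) at_top"
    using assms by (auto simp: is_cdf_def)
  have "eventually (\<lambda>s. F s \<le> F t) at_bot"
    unfolding eventually_at_bot_linorder
  proof (intro exI[of _ t] allI impI)
    fix s :: real assume "s \<le> t" then show "F s \<le> F t" by (rule monoD[OF m])
  qed
  from tendsto_le[OF _ tendsto_const l0 this] show "0 \<le> F t" by simp
  have "eventually (\<lambda>s. F t \<le> F s) at_top"
    unfolding eventually_at_top_linorder
  proof (intro exI[of _ t] allI impI)
    fix s :: real assume "t \<le> s" then show "F t \<le> F s" by (rule monoD[OF m])
  qed
  from tendsto_le[OF _ l1 tendsto_const this] show "F t \<le> 1" by simp
qed

lemma inj_sg: "inj (\<lambda>b::bool. if b then (1::real) else -1)"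
  by (auto simp: inj_def split: if_splits)

lemma pmf_sign: assumes "0 \<le> p" "p \<le> 1" "v \<in> {-1, 1}"
  shows "pmf (sign_pmf p) v = qq p v"
proof -
  have "pmf (sign_pmf p) ((\<lambda>b::bool. if b then (1::real) else -1) b) = pmf (bernoulli_pmf p) b" for b
    unfolding sign_pmf_def by (rule pmf_map_inj'[OF inj_sg])
  from this[of True] this[of False] assms show ?thesis by (auto simp: qq_def)
qed

lemma set_sign: "set_pmf (sign_pmf p) \<subseteq> {-1, 1}"
  unfolding sign_pmf_def by auto

lemma E_sum:
  fixes f :: "('n::finite \<Rightarrow> real) \<Rightarrow> 'b::{banach, second_countable_topology}"
  assumes "\<And>i. 0 \<le> p i" "\<And>i. p i \<le> 1"
  shows "measure_pmf.expectation (Pi_pmf UNIV 0 (\<lambda>i. sign_pmf (p i))) f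
       = (\<Sum>x\<in>SS. (\<Prod>i\<in>UNIV. qq (p i) (x i)) *\<^sub>R f x)"
proof -
  have "measure_pmf.expectation (Pi_pmf UNIV 0 (\<lambda>i. sign_pmf (p i))) f
      = (\<Sum>x\<in>SS. pmf (Pi_pmf UNIV 0 (\<lambda>i. sign_pmf (p i))) x *\<^sub>R f x)"
  proof (rule integral_measure_pmf[OF finite_SS])
    fix x assume "x \<in> set_pmf (Pi_pmf UNIV 0 (\<lambda>i. sign_pmf (p i)))"
    then show "x \<in> SS" using set_sign unfolding SS_def
      by (auto simp: set_Pi_pmf PiE_dflt_def)
  qed
  also have "\<dots> = (\<Sum>x\<in>SS. (\<Prod>i\<in>UNIV. qq (p i) (x i)) *\<^sub>R f x)"
  proof (intro sum.cong refl)
    fix x :: "'n \<Rightarrow> real" assume x: "x \<in> SS"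
    have "pmf (Pi_pmf UNIV 0 (\<lambda>i. sign_pmf (p i))) x = (\<Prod>i\<in>UNIV. pmf (sign_pmf (p i)) (x i))"
      by (rule pmf_Pi') auto
    also have "\<dots> = (\<Prod>i\<in>UNIV. qq (p i) (x i))"
      using x by (intro prod.cong refl pmf_sign assms) (auto simp: SS_def)
    finally show "pmf (Pi_pmf UNIV 0 (\<lambda>i. sign_pmf (p i))) x *\<^sub>R f x = (\<Prod>i\<in>UNIV. qq (p i) (x i)) *\<^sub>R f x"
      by simp
  qed
  finally show ?thesis .
qed

lemma split_sum:
  fixes g :: "('n::finite \<Rightarrow> real) \<Rightarrow> 'b::comm_monoid_add"
  shows "(\<Sum>x\<in>SS. g x) = (\<Sum>x\<in>SS \<inter> {x. x j = 1}. g x + g (x(j := -1)))"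
proof -
  have "SS = (SS \<inter> {x. x j = 1}) \<union> (SS \<inter> {x. x j = -1})" by (auto simp: SS_def)
  then have "(\<Sum>x\<in>SS. g x) = (\<Sum>x\<in>SS \<inter> {x. x j = 1}. g x) + (\<Sum>x\<in>SS \<inter> {x. x j = -1}. g x)"
  proof -
    have "(SS \<inter> {x. x j = 1}) \<inter> (SS \<inter> {x. x j = -1}) = {}" by auto
    moreover have "finite (SS \<inter> {x. x j = 1})" "finite (SS \<inter> {x. x j = -1})"
      using finite_SS by auto
    ultimately show ?thesis using \<open>SS = _\<close> sum.union_disjoint by metis
  qed
  also have "(\<Sum>x\<in>SS \<inter> {x. x j = -1}. g x) = (\<Sum>x\<in>SS \<inter> {x. x j = 1}. g (x(j := -1)))"
    by (rule sum.reindex_bij_witness[where i="\<lambda>x. x(j := -1)" and j="\<lambda>x. x(j := 1)"])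
       (auto simp: SS_def fun_upd_idem)
  finally show ?thesis by (simp add: sum.distrib)
qed

lemma partial_eq: assumes "multilinear L"
  shows "2 * partial L j x = L (x(j := 1)) - L (x(j := -1))"
proof -
  obtain c b where cb: "\<And>t. L (x(j := t)) = c * t + b"
    using assms unfolding multilinear_def by blast
  have "(\<lambda>t. L (x(j := t))) = (\<lambda>t. c * t + b)" using cb by auto
  moreover have "deriv (\<lambda>t. c * t + b) (x j) = c"
    by (rule DERIV_imp_deriv) (auto intro!: derivative_eq_intros)
  ultimately have "partial L j x = c" unfolding partial_def by simp
  with cb show ?thesis by simp
qed


lemma key_identity:
  fixes p :: "'n::finite \<Rightarrow> real" and L :: "('n \<Rightarrow> real) \<Rightarrow> real"
  assumes L_ml: "multilinear L"
  shows "(\<Sum>x\<in>SS. x j * (\<Prod>i\<in>UNIV - {j}. qq (p i) (x i)) * L x)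
       = (\<Sum>x\<in>SS. (\<Prod>i\<in>UNIV. qq (p i) (x i)) * (2 * partial L j x))"
proof -
  define R where "R x = (\<Prod>i\<in>UNIV - {j}. qq (p i) (x i))" for x
  have Rupd: "R (x(j := v)) = R x" for x v
    unfolding R_def by (intro prod.cong) auto
  have P: "(\<Prod>i\<in>UNIV. qq (p i) (x i)) = qq (p j) (x j) * R x" for x
    unfolding R_def by (simp add: prod.remove)
  have D: "2 * partial L j x = L (x(j := 1)) - L (x(j := -1))" for x
    using partial_eq[OF L_ml] .
  have "(\<Sum>x\<in>SS. x j * R x * L x) = (\<Sum>x\<in>SS \<inter> {x. x j = 1}. R x * (L x - L (x(j := -1))))"
    by (subst split_sum[of _ j], intro sum.cong refl) (auto simp: Rupd algebra_simps)
  also have "\<dots> = (\<Sum>x\<in>SS. (qq (p j) (x j) * R x) * (L (x(j := 1)) - L (x(j := -1))))"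
  proof (subst split_sum[of _ j], intro sum.cong refl)
    fix x assume "x \<in> SS \<inter> {x. x j = 1}"
    then have xj: "x j = 1" by auto
    then have "x(j := 1) = x" by auto
    then show "R x * (L x - L (x(j := - 1))) =
         qq (p j) (x j) * R x * (L (x(j := 1)) - L (x(j := - 1))) +
         qq (p j) ((x(j := - 1)) j) * R (x(j := - 1)) * (L ((x(j := - 1))(j := 1)) - L ((x(j := - 1))(j := - 1)))"
    proof -
      have qs: "qq (p j) 1 + qq (p j) (-1) = 1" unfolding qq_def by (simp add: field_simps)
      have "R x * (L x - L (x(j := - 1))) = (qq (p j) 1 + qq (p j) (-1)) * R x * (L x - L (x(j := - 1)))"
        by (simp add: qs)
      then show ?thesis using xj \<open>x(j := 1) = x\<close> by (simp add: Rupd ring_distribs)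
    qed
  qed
  finally show ?thesis by (simp add: R_def[symmetric] P D)
qed

theorem propositionB2:
  fixes a :: "real ^ 'd \<Rightarrow> 'n::finite \<Rightarrow> real"
    and ga :: "real ^ 'd \<Rightarrow> 'n \<Rightarrow> real ^ 'd"
    and F :: "real \<Rightarrow> real"
    and L :: "('n \<Rightarrow> real) \<Rightarrow> real"
    and \<phi> :: "real ^ 'd"
  assumes a_grad: "\<And>\<psi> i. GDERIV (\<lambda>\<theta>. a \<theta> i) \<psi> :> ga \<psi> i"
    and F_cdf: "is_cdf F"
    and F_diff: "\<And>t. F differentiable (at t)"
    and L_ml: "multilinear L"
  shows "GDERIV (\<lambda>\<psi>. measure_pmf.expectation (ste_dist F a \<psi>) L) \<phi> :>
           measure_pmf.expectation (ste_dist F a \<phi>) (ste F a ga L \<phi>)"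
proof -
  note Fb = cdf_bounds[OF F_cdf]
  define F' where "F' i = deriv F (a \<phi> i)" for i
  have E: "measure_pmf.expectation (ste_dist F a \<psi>) f
       = (\<Sum>x\<in>SS. (\<Prod>i\<in>UNIV. qq (F (a \<psi> i)) (x i)) *\<^sub>R f x)"
    for \<psi> and f :: "('n \<Rightarrow> real) \<Rightarrow> 'b::{banach, second_countable_topology}"
    unfolding ste_dist_def by (rule E_sum) (auto simp: Fb)
  have dF: "((\<lambda>\<theta>. F (a \<theta> i)) has_derivative (\<lambda>h. h \<bullet> (F' i *\<^sub>R ga \<phi> i))) (at \<phi>)" for i
    using GDERIV_DERIV_compose[OF a_grad[where \<psi>=\<phi> and i=i], of F "deriv F (a \<phi> i)"] F_diff
    unfolding F'_def gderiv_def by (simp add: DERIV_deriv_iff_real_differentiable)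
  have dq: "((\<lambda>\<theta>. qq (F (a \<theta> i)) v) has_derivative (\<lambda>h. v * (F' i * (h \<bullet> ga \<phi> i)))) (at \<phi>)" for i v
  proof -
    have eq: "(\<lambda>\<theta>. qq (F (a \<theta> i)) v) = (\<lambda>\<theta>. (1 - v)/2 + v * F (a \<theta> i))"
      by (auto simp: qq_def field_simps)
    show ?thesis unfolding eq
      by (rule has_derivative_eq_rhs[OF has_derivative_add[OF has_derivative_const has_derivative_mult_right[OF dF]]])
        (simp add: fun_eq_iff)
  qed
  have d: "((\<lambda>\<psi>. \<Sum>x\<in>SS. (\<Prod>i\<in>UNIV. qq (F (a \<psi> i)) (x i)) *\<^sub>R L x) has_derivative
     (\<lambda>h. \<Sum>x\<in>SS. (\<Sum>i\<in>UNIV. x i * (F' i * (h \<bullet> ga \<phi> i)) * (\<Prod>j\<in>UNIV - {i}. qq (F (a \<phi> j)) (x j))) *\<^sub>R L x)) (at \<phi>)"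
    by (intro has_derivative_sum has_derivative_scaleR_left has_derivative_prod dq)
  show ?thesis
    unfolding gderiv_def E
  proof (rule has_derivative_eq_rhs[OF d], rule ext)
    fix h
    have "(\<Sum>x\<in>SS. (\<Sum>i\<in>UNIV. x i * (F' i * (h \<bullet> ga \<phi> i)) * (\<Prod>j\<in>UNIV - {i}. qq (F (a \<phi> j)) (x j))) *\<^sub>R L x)
        = (\<Sum>x\<in>SS. \<Sum>i\<in>UNIV. F' i * (h \<bullet> ga \<phi> i) * (x i * (\<Prod>j\<in>UNIV - {i}. qq (F (a \<phi> j)) (x j)) * L x))"
      unfolding real_scaleR_def sum_distrib_right by (intro sum.cong refl) (simp add: mult_ac)
    also have "\<dots> = (\<Sum>i\<in>UNIV. \<Sum>x\<in>SS. F' i * (h \<bullet> ga \<phi> i) * (x i * (\<Prod>j\<in>UNIV - {i}. qq (F (a \<phi> j)) (x j)) * L x))"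
      by (rule sum.swap)
    also have "\<dots> = (\<Sum>i\<in>UNIV. F' i * (h \<bullet> ga \<phi> i) * (\<Sum>x\<in>SS. x i * (\<Prod>j\<in>UNIV - {i}. qq (F (a \<phi> j)) (x j)) * L x))"
      by (simp only: sum_distrib_left)
    also have "\<dots> = (\<Sum>i\<in>UNIV. F' i * (h \<bullet> ga \<phi> i) * (\<Sum>x\<in>SS. (\<Prod>j\<in>UNIV. qq (F (a \<phi> j)) (x j)) * (2 * partial L i x)))"
      by (simp only: key_identity[OF L_ml])
    also have "\<dots> = (\<Sum>i\<in>UNIV. \<Sum>x\<in>SS. F' i * (h \<bullet> ga \<phi> i) * ((\<Prod>j\<in>UNIV. qq (F (a \<phi> j)) (x j)) * (2 * partial L i x)))"
      by (simp only: sum_distrib_left)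
    also have "\<dots> = (\<Sum>x\<in>SS. \<Sum>i\<in>UNIV. F' i * (h \<bullet> ga \<phi> i) * ((\<Prod>j\<in>UNIV. qq (F (a \<phi> j)) (x j)) * (2 * partial L i x)))"
      by (rule sum.swap)
    also have "\<dots> = h \<bullet> (\<Sum>x\<in>SS. (\<Prod>i\<in>UNIV. qq (F (a \<phi> i)) (x i)) *\<^sub>R ste F a ga L \<phi> x)"
      unfolding ste_def F'_def inner_sum_right inner_scaleR_right sum_distrib_left
      by (intro sum.cong refl) (simp add: mult_ac)
    finally show "(\<Sum>x\<in>SS. (\<Sum>i\<in>UNIV. x i * (F' i * (h \<bullet> ga \<phi> i)) * (\<Prod>j\<in>UNIV - {i}. qq (F (a \<phi> j)) (x j))) *\<^sub>R L x)
        = h \<bullet> (\<Sum>x\<in>SS. (\<Prod>i\<in>UNIV. qq (F (a \<phi> i)) (x i)) *\<^sub>R ste F a ga L \<phi> x)" .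
  qed
qed

end
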